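(* Let $(\mathfrak g,[\cdot,\cdot]_{\mathfrak g},E)$ be an ENL algebra and $K:W\to\mathfrak g$ an ENE-relative Rota–Baxter operator with respect to an ENE-representation $(W;T,\rho)$, and let $(W,[\cdot,\cdot]_K,T)$ be the ENL algebra with $[u,v]_K=\rho(Ku)v-\rho(Kv)u$. Define $\mu:W\to\mathfrak{gl}(\mathfrak g)$ by $\mu(u)x=K(\rho(x)u)-[x,Ku]_{\mathfrak g}$. Then $((\mathfrak g,E),(W,T);\rho,\mu)$ is a matched pair of ENL algebras.
   Context: Vector spaces are finite-dimensional over an algebraically closed field of characteristic zero. An ENL algebra is a Lie algebra with linear $E$ satisfying $E[x,y]=[x,Ey]$ for all $x,y$. An ENE-representation $(W;T,\rho)$ of $(\mathfrak g,E)$ is a representation $\rho:\mathfrak g\to\mathfrak{gl}(W)$ with linear $T$ such that $T(\rho(x)u)=\rho(Ex)u=\rho(x)(Tu)$. An ENE-relative Rota–Baxter operator is a linear $K:W\to\mathfrak g$ with $[Ku,Kv]_{\mathfrak g}=K(\rho(Ku)v-\rho(Kv)u)$ and $E\circ K=K\circ T$. A matched pair of Lie algebras $(\mathfrak g,\mathfrak h;\rho,\mu)$: Lie algebras $\mathfrak g,\mathfrak h$ with representations $\rho:\mathfrak g\to\mathfrak{gl}(\mathfrak h)$, $\mu:\mathfrak h\to\mathfrak{gl}(\mathfrak g)$ such that $\rho(x)[\xi,\eta]_{\mathfrak h}=[\rho(x)\xi,\eta]_{\mathfrak h}+[\xi,\rho(x)\eta]_{\mathfrak h}+\rho(\mu(\eta)x)\xi-\rho(\mu(\xi)x)\eta$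 and $\mu(\xi)[x,y]_{\mathfrak g}=[\mu(\xi)x,y]_{\mathfrak g}+[x,\mu(\xi)y]_{\mathfrak g}+\mu(\rho(y)\xi)x-\mu(\rho(x)\xi)y$. For ENL algebras $(\mathfrak g,E),(\mathfrak h,F)$, a matched pair of ENL algebras is such a matched pair with $F(\rho(x)\xi)=\rho(Ex)\xi=\rho(x)(F\xi)$ and $E(\mu(\xi)x)=\mu(F\xi)x=\mu(\xi)(Ex)$ for all $x\in\mathfrak g,\xi\in\mathfrak h$. *)

theory Defs
  imports "HOL-Computational_Algebra.Polynomial"
begin

text \<open>Ground field: algebraically closed (char 0 is imposed via the class field_char_0).\<close>
definition alg_closed :: "'k::field itself \<Rightarrow> bool" where
  "alg_closed TYPE('k) \<longleftrightarrow> (\<forall>p::'k poly. 0 < degree p \<longrightarrow> (\<exists>x. poly p x = 0))"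

definition fd_space :: "('k::field \<Rightarrow> 'v::ab_group_add \<Rightarrow> 'v) \<Rightarrow> bool" where
  "fd_space s \<longleftrightarrow> vector_space s \<and> (\<exists>B. finite_dimensional_vector_space s B)"

definition lie_algebra :: "('k::field \<Rightarrow> 'g::ab_group_add \<Rightarrow> 'g) \<Rightarrow> ('g \<Rightarrow> 'g \<Rightarrow> 'g) \<Rightarrow> bool" where
  "lie_algebra s br \<longleftrightarrow> vector_space s
     \<and> (\<forall>x. Vector_Spaces.linear s s (br x)) \<and> (\<forall>y. Vector_Spaces.linear s s (\<lambda>x. br x y))
     \<and> (\<forall>x. br x x = 0)
     \<and> (\<forall>x y z. br x (br y z) + br y (br z x) + br z (br x y) = 0)"

definition lie_rep :: "('k::field \<Rightarrow> 'g::ab_group_add \<Rightarrow> 'g) \<Rightarrow> ('g \<Rightarrow> 'g \<Rightarrow> 'g) \<Rightarrow>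
    ('k \<Rightarrow> 'w::ab_group_add \<Rightarrow> 'w) \<Rightarrow> ('g \<Rightarrow> 'w \<Rightarrow> 'w) \<Rightarrow> bool" where
  "lie_rep sg br sw rho \<longleftrightarrow> vector_space sw
     \<and> (\<forall>x y w. rho (x + y) w = rho x w + rho y w)
     \<and> (\<forall>c x w. rho (sg c x) w = sw c (rho x w))
     \<and> (\<forall>x. Vector_Spaces.linear sw sw (rho x))
     \<and> (\<forall>x y w. rho (br x y) w = rho x (rho y w) - rho y (rho x w))"

definition ENL_algebra :: "('k::field \<Rightarrow> 'g::ab_group_add \<Rightarrow> 'g) \<Rightarrow> ('g \<Rightarrow> 'g \<Rightarrow> 'g) \<Rightarrow> ('g \<Rightarrow> 'g) \<Rightarrow> bool" where
  "ENL_algebra s br E \<longleftrightarrow> lie_algebra s br \<and> Vector_Spaces.linear s s E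
     \<and> (\<forall>x y. E (br x y) = br x (E y))"

definition ENE_rep :: "('k::field \<Rightarrow> 'g::ab_group_add \<Rightarrow> 'g) \<Rightarrow> ('g \<Rightarrow> 'g \<Rightarrow> 'g) \<Rightarrow> ('g \<Rightarrow> 'g) \<Rightarrow>
    ('k \<Rightarrow> 'w::ab_group_add \<Rightarrow> 'w) \<Rightarrow> ('w \<Rightarrow> 'w) \<Rightarrow> ('g \<Rightarrow> 'w \<Rightarrow> 'w) \<Rightarrow> bool" where
  "ENE_rep sg br E sw T rho \<longleftrightarrow> lie_rep sg br sw rho \<and> Vector_Spaces.linear sw sw T
     \<and> (\<forall>x u. T (rho x u) = rho (E x) u \<and> rho (E x) u = rho x (T u))"

definition ENE_RB :: "('k::field \<Rightarrow> 'g::ab_group_add \<Rightarrow> 'g) \<Rightarrow> ('g \<Rightarrow> 'g \<Rightarrow> 'g) \<Rightarrow> ('g \<Rightarrow> 'g) \<Rightarrow>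
    ('k \<Rightarrow> 'w::ab_group_add \<Rightarrow> 'w) \<Rightarrow> ('w \<Rightarrow> 'w) \<Rightarrow> ('g \<Rightarrow> 'w \<Rightarrow> 'w) \<Rightarrow> ('w \<Rightarrow> 'g) \<Rightarrow> bool" where
  "ENE_RB sg br E sw T rho K \<longleftrightarrow> Vector_Spaces.linear sw sg K
     \<and> (\<forall>u v. br (K u) (K v) = K (rho (K u) v - rho (K v) u))
     \<and> (\<forall>u. E (K u) = K (T u))"

definition matched_pair :: "('k::field \<Rightarrow> 'g::ab_group_add \<Rightarrow> 'g) \<Rightarrow> ('g \<Rightarrow> 'g \<Rightarrow> 'g) \<Rightarrow>
    ('k \<Rightarrow> 'h::ab_group_add \<Rightarrow> 'h) \<Rightarrow> ('h \<Rightarrow> 'h \<Rightarrow> 'h) \<Rightarrow>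
    ('g \<Rightarrow> 'h \<Rightarrow> 'h) \<Rightarrow> ('h \<Rightarrow> 'g \<Rightarrow> 'g) \<Rightarrow> bool" where
  "matched_pair sg brg sh brh rho mu \<longleftrightarrow>
     lie_algebra sg brg \<and> lie_algebra sh brh
     \<and> lie_rep sg brg sh rho \<and> lie_rep sh brh sg mu
     \<and> (\<forall>x \<xi> \<eta>. rho x (brh \<xi> \<eta>) = brh (rho x \<xi>) \<eta> + brh \<xi> (rho x \<eta>)
                    + rho (mu \<eta> x) \<xi> - rho (mu \<xi> x) \<eta>)
     \<and> (\<forall>\<xi> x y. mu \<xi> (brg x y) = brg (mu \<xi> x) y + brg x (mu \<xi> y)
                    + mu (rho y \<xi>) x - mu (rho x \<xi>) y)"

definition ENL_matched_pair :: "('k::field \<Rightarrow> 'g::ab_group_add \<Rightarrow> 'g) \<Rightarrow> ('g \<Rightarrow> 'g \<Rightarrow> 'g) \<Rightarrow> ('g \<Rightarrow> 'g) \<Rightarrow>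
    ('k \<Rightarrow> 'h::ab_group_add \<Rightarrow> 'h) \<Rightarrow> ('h \<Rightarrow> 'h \<Rightarrow> 'h) \<Rightarrow> ('h \<Rightarrow> 'h) \<Rightarrow>
    ('g \<Rightarrow> 'h \<Rightarrow> 'h) \<Rightarrow> ('h \<Rightarrow> 'g \<Rightarrow> 'g) \<Rightarrow> bool" where
  "ENL_matched_pair sg brg E sh brh F rho mu \<longleftrightarrow>
     ENL_algebra sg brg E \<and> ENL_algebra sh brh F
     \<and> matched_pair sg brg sh brh rho mu
     \<and> (\<forall>x \<xi>. F (rho x \<xi>) = rho (E x) \<xi> \<and> rho (E x) \<xi> = rho x (F \<xi>))
     \<and> (\<forall>x \<xi>. E (mu \<xi> x) = mu (F \<xi>) x \<and> mu (F \<xi>) x = mu \<xi> (E x))"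

end

theory Submission
  imports Defs
begin

lemma addhom_diff:
  fixes f :: "'a::ab_group_add \<Rightarrow> 'b::ab_group_add"
  assumes "\<And>x y. f (x + y) = f x + f y"
  shows "f (x - y) = f x - f y"
  by (metis assms diff_add_cancel eq_diff_eq)

lemma lin_rules:
  assumes "Vector_Spaces.linear s1 s2 f"
  shows "f (x + y) = f x + f y" "f (x - y) = f x - f y" "f (s1 c x) = s2 c (f x)"
    "vector_space s1" "vector_space s2"
proof -
  have a: "\<And>x y. f (x + y) = f x + f y" using assms unfolding Vector_Spaces.linear_iff by auto
  show "f (x + y) = f x + f y" "f (x - y) = f x - f y" "f (s1 c x) = s2 c (f x)"
    "vector_space s1" "vector_space s2"
    using assms addhom_diff[of f, OF a] unfolding Vector_Spaces.linear_iff by auto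
qed

theorem proposition6p5:
  fixes sg :: "'k::field_char_0 \<Rightarrow> 'g::ab_group_add \<Rightarrow> 'g"
    and br :: "'g \<Rightarrow> 'g \<Rightarrow> 'g" and E :: "'g \<Rightarrow> 'g"
    and sw :: "'k \<Rightarrow> 'w::ab_group_add \<Rightarrow> 'w" and T :: "'w \<Rightarrow> 'w"
    and rho :: "'g \<Rightarrow> 'w \<Rightarrow> 'w" and K :: "'w \<Rightarrow> 'g"
  assumes "alg_closed TYPE('k)"
    and "fd_space sg" and "fd_space sw"
    and "ENL_algebra sg br E"
    and "ENE_rep sg br E sw T rho"
    and "ENE_RB sg br E sw T rho K"
  shows "ENL_matched_pair sg br E sw (\<lambda>u v. rho (K u) v - rho (K v) u) T rho
           (\<lambda>u x. K (rho x u) - br x (K u))"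
proof -
  have LA: "lie_algebra sg br" and linE: "Vector_Spaces.linear sg sg E"
    and Ebr: "\<And>x y. E (br x y) = br x (E y)"
    using assms(4) unfolding ENL_algebra_def by auto
  have vsg: "vector_space sg" and linbr1: "\<And>x. Vector_Spaces.linear sg sg (br x)"
    and linbr2: "\<And>y. Vector_Spaces.linear sg sg (\<lambda>x. br x y)"
    and alt: "\<And>x. br x x = 0"
    and jac: "\<And>x y z. br x (br y z) + br y (br z x) + br z (br x y) = 0"
    using LA unfolding lie_algebra_def by auto
  have REP: "lie_rep sg br sw rho" and linT: "Vector_Spaces.linear sw sw T"
    and Trho: "\<And>x u. T (rho x u) = rho (E x) u" and rhoT: "\<And>x u. rho (E x) u = rho x (T u)"
    using assms(5) unfolding ENE_rep_def by auto
  have vsw: "vector_space sw" and rA: "\<And>x y w. rho (x + y) w = rho x w + rho y w"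
    and rS: "\<And>c x w. rho (sg c x) w = sw c (rho x w)"
    and linr: "\<And>x. Vector_Spaces.linear sw sw (rho x)"
    and rbr: "\<And>x y w. rho (br x y) w = rho x (rho y w) - rho y (rho x w)"
    using REP unfolding lie_rep_def by auto
  have linK: "Vector_Spaces.linear sw sg K"
    and RB: "\<And>u v. br (K u) (K v) = K (rho (K u) v - rho (K v) u)"
    and EK: "\<And>u. E (K u) = K (T u)"
    using assms(6) unfolding ENE_RB_def by auto
  note brA2 = lin_rules(1)[OF linbr1] and brD2 = lin_rules(2)[OF linbr1]
  note brS2 = lin_rules(3)[OF linbr1]
  note brA1 = lin_rules(1)[OF linbr2] and brD1 = lin_rules(2)[OF linbr2]
  note brS1 = lin_rules(3)[OF linbr2]
  note rA2 = lin_rules(1)[OF linr] and rD2 = lin_rules(2)[OF linr]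
  note rS2 = lin_rules(3)[OF linr]
  have rD: "\<And>x y w. rho (x - y) w = rho x w - rho y w"
    using addhom_diff[of "\<lambda>x. rho x w" for w] rA by blast
  note KA = lin_rules(1)[OF linK] and KD = lin_rules(2)[OF linK] and KS = lin_rules(3)[OF linK]
  note EA = lin_rules(1)[OF linE] and ED = lin_rules(2)[OF linE]
  note TA = lin_rules(1)[OF linT] and TD = lin_rules(2)[OF linT]
  have anti: "\<And>a b. br a b = - br b a"
  proof -
    fix a b
    have "0 = br (a + b) (a + b)" by (simp add: alt)
    also have "\<dots> = br a b + br b a" unfolding brA1 brA2 by (simp add: alt)
    finally show "br a b = - br b a" by (metis add.commute add_eq_0_iff)
  qed
  have jac2: "\<And>x a b. br x (br a b) = br (br x a) b - br (br x b) a"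
  proof -
    fix x a b
    have j: "br x (br a b) + br a (br b x) + br b (br x a) = 0" by (rule jac)
    have n1: "\<And>z w. br (- z) w = - br z w" by (metis brD1 diff_0 diff_self)
    have "br a (br b x) = - br (br b x) a" by (rule anti)
    also have "\<dots> = br (br x b) a" by (subst anti[of b x], simp add: n1)
    finally have e1: "br a (br b x) = br (br x b) a" .
    have e2: "br b (br x a) = - br (br x a) b" by (rule anti)
    show "br x (br a b) = br (br x a) b - br (br x b) a"
      using j unfolding e1 e2 by (simp add: algebra_simps eq_neg_iff_add_eq_0)
  qed
  have msg: "module sg" and msw: "module sw" using vsg vsw by (simp_all add: module_iff_vector_space)
  define brK where "brK = (\<lambda>u v. rho (K u) v - rho (K v) u)"
  define mu where "mu = (\<lambda>u x. K (rho x u) - br x (K u))"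
  have KbrK: "\<And>u v. K (brK u v) = br (K u) (K v)" by (simp add: brK_def RB)
  have linbrK2: "\<And>u. Vector_Spaces.linear sw sw (brK u)"
    unfolding Vector_Spaces.linear_iff brK_def using vsw
    by (auto simp: rA2 rD2 KA rA KS rS rS2 algebra_simps module.scale_right_diff_distrib[OF msw])
  have linbrK1: "\<And>v. Vector_Spaces.linear sw sw (\<lambda>u. brK u v)"
    unfolding Vector_Spaces.linear_iff brK_def using vsw
    by (auto simp: rA2 rD2 KA rA KS rS rS2 algebra_simps module.scale_right_diff_distrib[OF msw])
  have jacK: "\<And>x y z. brK x (brK y z) + brK y (brK z x) + brK z (brK x y) = 0"
  proof -
    fix x y z
    have e: "\<And>a b c. brK a (brK b c) = rho (K a) (rho (K b) c) - rho (K a) (rho (K c) b)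
         - rho (K b) (rho (K c) a) + rho (K c) (rho (K b) a)"
      by (simp add: brK_def KbrK[unfolded brK_def] rbr rD2 algebra_simps)
    show "brK x (brK y z) + brK y (brK z x) + brK z (brK x y) = 0"
      unfolding e by (simp add: algebra_simps)
  qed
  have LAW: "lie_algebra sw brK"
    unfolding lie_algebra_def using vsw linbrK1 linbrK2 jacK by (auto simp: brK_def)
  have ENLW: "ENL_algebra sw brK T"
    unfolding ENL_algebra_def using LAW linT
    by (auto simp: brK_def TD Trho rhoT EK[symmetric])
  have muA1: "\<And>u v x. mu (u + v) x = mu u x + mu v x"
    by (simp add: mu_def rA2 KA brA2 algebra_simps)
  have muS1: "\<And>c u x. mu (sw c u) x = sg c (mu u x)"
    by (simp add: mu_def rS2 KS brS2 lin_rules(2)[OF linE] module.scale_right_diff_distrib[OF msg])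
  have linmu: "\<And>u. Vector_Spaces.linear sg sg (mu u)"
    unfolding Vector_Spaces.linear_iff using vsg
    by (auto simp: mu_def rA KA brA1 rS KS brS1 algebra_simps module.scale_right_diff_distrib[OF msg])
  have mubr: "\<And>u v x. mu (brK u v) x = mu u (mu v x) - mu v (mu u x)"
  proof -
    fix u v x
    have e: "\<And>a b. mu a (mu b x) = - K (rho x (rho (K b) a)) + K (rho (K b) (rho x a))
        + K (rho (K a) (rho x b)) + br (br x (K b)) (K a)"
    proof -
      fix a b
      have "mu a (mu b x) = K (rho (K (rho x b)) a) - K (rho (br x (K b)) a)
          - br (K (rho x b)) (K a) + br (br x (K b)) (K a)"
        by (simp add: mu_def rD KD brD1 algebra_simps)
      also have "\<dots> = - K (rho x (rho (K b) a)) + K (rho (K b) (rho x a))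
        + K (rho (K a) (rho x b)) + br (br x (K b)) (K a)"
        by (simp add: RB rbr KD KA rD2 algebra_simps)
      finally show "?thesis a b" .
    qed
    have l: "mu (brK u v) x = K (rho x (rho (K u) v)) - K (rho x (rho (K v) u))
         - br x (br (K u) (K v))"
      by (simp add: mu_def brK_def rD2 KD RB)
    show "mu (brK u v) x = mu u (mu v x) - mu v (mu u x)"
      unfolding l e jac2[of x "K u" "K v"] by (simp add: algebra_simps)
  qed
  have REPmu: "lie_rep sw brK sg mu"
    unfolding lie_rep_def using vsg muA1 muS1 linmu mubr by auto
  have MP1: "\<And>x \<xi> \<eta>. rho x (brK \<xi> \<eta>) = brK (rho x \<xi>) \<eta> + brK \<xi> (rho x \<eta>)
                    + rho (mu \<eta> x) \<xi> - rho (mu \<xi> x) \<eta>"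
    by (simp add: brK_def mu_def rD2 rD rbr algebra_simps)
  have MP2: "\<And>\<xi> x y. mu \<xi> (br x y) = br (mu \<xi> x) y + br x (mu \<xi> y)
                    + mu (rho y \<xi>) x - mu (rho x \<xi>) y"
  proof -
    fix \<xi> x y
    have a: "br (K (rho x \<xi>)) y = - br y (K (rho x \<xi>))" by (rule anti)
    have b: "br x (br y (K \<xi>)) = br (br x y) (K \<xi>) - br (br x (K \<xi>)) y" by (rule jac2)
    show "mu \<xi> (br x y) = br (mu \<xi> x) y + br x (mu \<xi> y)
                    + mu (rho y \<xi>) x - mu (rho x \<xi>) y"
      by (simp add: mu_def rbr KD brD1 brD2 a b algebra_simps)
  qed
  have MP: "matched_pair sg br sw brK rho mu"
    unfolding matched_pair_def using LA LAW REP REPmu MP1 MP2 by blast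
  have C1: "\<And>x \<xi>. T (rho x \<xi>) = rho (E x) \<xi> \<and> rho (E x) \<xi> = rho x (T \<xi>)"
    using Trho rhoT by auto
  have C2: "\<And>x \<xi>. E (mu \<xi> x) = mu (T \<xi>) x \<and> mu (T \<xi>) x = mu \<xi> (E x)"
  proof -
    fix x \<xi>
    have nE: "\<And>z. E (- z) = - E z" by (metis ED diff_0 diff_self)
    have "br (E x) (K \<xi>) = - br (K \<xi>) (E x)" by (rule anti)
    also have "\<dots> = - E (br (K \<xi>) x)" by (simp add: Ebr)
    also have "\<dots> = E (br x (K \<xi>))" by (subst anti, simp add: nE)
    also have "\<dots> = br x (E (K \<xi>))" by (rule Ebr)
    finally have "br (E x) (K \<xi>) = br x (E (K \<xi>))" .
    then show "E (mu \<xi> x) = mu (T \<xi>) x \<and> mu (T \<xi>) x = mu \<xi> (E x)"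
      by (simp add: mu_def ED Ebr EK Trho rhoT)
  qed
  show ?thesis
    unfolding ENL_matched_pair_def brK_def[symmetric] mu_def[symmetric]
    using assms(4) ENLW MP C1 C2 by blast
qed

end
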